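(* Let $\alpha=(\alpha_n)_{n\in\mathbb{N}}\in\ell^2$ and let $J_0=\sup_{m\ge0}(m+1)^{1/2}\big(\sum_{k=m}^\infty|\alpha_k|^2\big)^{1/2}$. The Rhaly operator $R_\alpha$ is bounded on $\ell^2$ if and only if $J_0<\infty$, and in this case $J_0\le\|R_\alpha\|\le2\sqrt2\,J_0$.
   Context: $\mathbb{N}=\{0,1,2,\dots\}$; $\ell^2$ is the space of square-summable functions $\mathbb{N}\to\mathbb{C}$. The Rhaly operator is $(R_\alpha f)(k)=\alpha_k\sum_{j=0}^k f(j)$, and $\|R_\alpha\|=\sup_{\|f\|_2=1}\|R_\alpha f\|_2$. *)

theory Defs
  imports "HOL-Analysis.Analysis"
begin

definition in_l2 :: "(nat \<Rightarrow> complex) \<Rightarrow> bool" where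
  "in_l2 f \<longleftrightarrow> summable (\<lambda>k. (cmod (f k))\<^sup>2)"

definition l2_norm :: "(nat \<Rightarrow> complex) \<Rightarrow> ereal" where
  "l2_norm f = (if in_l2 f then ereal (sqrt (\<Sum>k. (cmod (f k))\<^sup>2)) else \<infinity>)"

definition rhaly :: "(nat \<Rightarrow> complex) \<Rightarrow> (nat \<Rightarrow> complex) \<Rightarrow> (nat \<Rightarrow> complex)" where
  "rhaly \<alpha> f = (\<lambda>k. \<alpha> k * (\<Sum>j\<le>k. f j))"

definition rhaly_norm :: "(nat \<Rightarrow> complex) \<Rightarrow> ereal" where
  "rhaly_norm \<alpha> = (SUP f \<in> {f. in_l2 f \<and> l2_norm f = 1}. l2_norm (rhaly \<alpha> f))"

definition rhaly_bounded :: "(nat \<Rightarrow> complex) \<Rightarrow> bool" where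
  "rhaly_bounded \<alpha> \<longleftrightarrow>
     (\<forall>f. in_l2 f \<longrightarrow> in_l2 (rhaly \<alpha> f)) \<and>
     (\<exists>C::real. \<forall>f. in_l2 f \<longrightarrow> l2_norm (rhaly \<alpha> f) \<le> ereal C * l2_norm f)"

definition J0 :: "(nat \<Rightarrow> complex) \<Rightarrow> ereal" where
  "J0 \<alpha> = (SUP m. ereal (sqrt (real m + 1) * sqrt (\<Sum>k. (cmod (\<alpha> (k + m)))\<^sup>2)))"

end

theory Submission
  imports Defs
begin

lemma hardy_tel:
  fixes a :: "nat \<Rightarrow> real"
  defines "b \<equiv> \<lambda>k. (\<Sum>j\<le>k. a j) / (real k + 1)"
  shows "(\<Sum>k\<le>N. (b k)\<^sup>2 - 2 * a k * b k) \<le> - (real N + 1) * (b N)\<^sup>2"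
proof (induction N)
  case 0
  then show ?case by (simp add: b_def power2_eq_square)
next
  case (Suc N)
  have e: "a (Suc N) = (real N + 2) * b (Suc N) - (real N + 1) * b N"
  proof -
    have 1: "(real N + 2) * b (Suc N) = (\<Sum>j\<le>Suc N. a j)"
      unfolding b_def by (simp add: field_simps)
    have 2: "(real N + 1) * b N = (\<Sum>j\<le>N. a j)"
      unfolding b_def by (simp add: field_simps)
    show ?thesis using 1 2 by simp
  qed
  have "(\<Sum>k\<le>Suc N. (b k)\<^sup>2 - 2 * a k * b k) \<le> - (real N + 1) * (b N)\<^sup>2 + (b (Suc N))\<^sup>2 - 2 * a (Suc N) * b (Suc N)"
    using Suc by simp
  also have "\<dots> = - (real (Suc N) + 1) * (b (Suc N))\<^sup>2 - (real N + 1) * (b N - b (Suc N))\<^sup>2"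
    unfolding e by (simp add: power2_eq_square algebra_simps)
  also have "\<dots> \<le> - (real (Suc N) + 1) * (b (Suc N))\<^sup>2" by simp
  finally show ?case .
qed

lemma hardy_fin:
  fixes a :: "nat \<Rightarrow> real"
  assumes "\<And>j. a j \<ge> 0"
  shows "(\<Sum>k\<le>N. a k * ((\<Sum>j\<le>k. a j) / (real k + 1))) \<le> 2 * (\<Sum>k\<le>N. (a k)\<^sup>2)"
proof -
  define b where "b \<equiv> \<lambda>k. (\<Sum>j\<le>k. a j) / (real k + 1)"
  define X where "X = (\<Sum>k\<le>N. a k * b k)"
  define Y where "Y = (\<Sum>k\<le>N. (b k)\<^sup>2)"
  define Z where "Z = (\<Sum>k\<le>N. (a k)\<^sup>2)"
  have "(\<Sum>k\<le>N. (b k)\<^sup>2 - 2 * a k * b k) \<le> 0"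
  proof -
    have "0 \<le> (real N + 1) * (b N)\<^sup>2" by simp
    moreover have "- (real N + 1) * (b N)\<^sup>2 = - ((real N + 1) * (b N)\<^sup>2)" by (rule mult_minus_left)
    ultimately show ?thesis using hardy_tel[of a N] unfolding b_def by linarith
  qed
  then have Y: "Y \<le> 2 * X" unfolding X_def Y_def
    by (simp add: sum_subtractf sum_distrib_left mult.assoc)
  have X0: "X \<ge> 0" unfolding X_def b_def using assms by (auto intro!: sum_nonneg mult_nonneg_nonneg divide_nonneg_nonneg)
  have Z0: "Z \<ge> 0" unfolding Z_def by (auto intro!: sum_nonneg)
  have "X\<^sup>2 \<le> Z * Y" unfolding X_def Y_def Z_def by (rule Cauchy_Schwarz_ineq_sum)
  also have "\<dots> \<le> Z * (2 * X)" using Y Z0 by (simp add: mult_left_mono)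
  finally have "X * X \<le> (2 * Z) * X" by (simp add: power2_eq_square algebra_simps)
  then have "X \<le> 2 * Z" using X0
  proof (cases "X = 0")
    case True then show ?thesis using Z0 by simp
  next
    case False then have "X > 0" using X0 by simp
    then show ?thesis using \<open>X * X \<le> (2 * Z) * X\<close> by (simp add: mult_le_cancel_right_pos)
  qed
  then show ?thesis unfolding X_def Z_def b_def by simp
qed

lemma sq_le_sum:
  fixes a :: "nat \<Rightarrow> real"
  assumes "\<And>j. a j \<ge> 0"
  shows "(\<Sum>j\<le>k. a j)\<^sup>2 \<le> (\<Sum>j\<le>k. 2 * a j * (\<Sum>i\<le>j. a i))"
proof (induction k)
  case 0 then show ?case by (simp add: power2_eq_square assms)
next
  case (Suc k)
  have "(\<Sum>j\<le>Suc k. a j)\<^sup>2 = (\<Sum>j\<le>k. a j)\<^sup>2 + 2 * a (Suc k) * (\<Sum>j\<le>Suc k. a j) - (a (Suc k))\<^sup>2"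
    by (simp add: power2_eq_square algebra_simps)
  also have "\<dots> \<le> (\<Sum>j\<le>k. a j)\<^sup>2 + 2 * a (Suc k) * (\<Sum>j\<le>Suc k. a j)" by simp
  also have "\<dots> \<le> (\<Sum>j\<le>Suc k. 2 * a j * (\<Sum>i\<le>j. a i))" using Suc by simp
  finally show ?case .
qed

lemma swap_fin:
  fixes w c :: "nat \<Rightarrow> real"
  shows "(\<Sum>k\<le>N. w k * (\<Sum>j\<le>k. c j)) = (\<Sum>j\<le>N. c j * (\<Sum>k=j..N. w k))"
proof (induction N)
  case 0 then show ?case by simp
next
  case (Suc N)
  have "(\<Sum>j\<le>Suc N. c j * (\<Sum>k=j..Suc N. w k)) = (\<Sum>j\<le>N. c j * (\<Sum>k=j..Suc N. w k)) + c (Suc N) * w (Suc N)"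
    by simp
  also have "(\<Sum>j\<le>N. c j * (\<Sum>k=j..Suc N. w k)) = (\<Sum>j\<le>N. c j * (\<Sum>k=j..N. w k) + c j * w (Suc N))"
    by (intro sum.cong refl) (simp add: algebra_simps)
  finally show ?case using Suc by (simp add: sum.distrib sum_distrib_left sum_distrib_right algebra_simps)
qed

lemma main_fin:
  fixes a w :: "nat \<Rightarrow> real"
  assumes a0: "\<And>j. a j \<ge> 0" and w0: "\<And>j. w j \<ge> 0"
    and B: "\<And>m. m \<le> N \<Longrightarrow> (real m + 1) * (\<Sum>k=m..N. w k) \<le> B"
  shows "(\<Sum>k\<le>N. w k * (\<Sum>j\<le>k. a j)\<^sup>2) \<le> 4 * B * (\<Sum>k\<le>N. (a k)\<^sup>2)"
proof -
  define c where "c j = 2 * a j * (\<Sum>i\<le>j. a i)" for j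
  have c0: "c j \<ge> 0" for j unfolding c_def using a0 by (auto intro!: sum_nonneg mult_nonneg_nonneg)
  have "(\<Sum>k\<le>N. w k * (\<Sum>j\<le>k. a j)\<^sup>2) \<le> (\<Sum>k\<le>N. w k * (\<Sum>j\<le>k. c j))"
    unfolding c_def by (intro sum_mono mult_left_mono sq_le_sum a0 w0)
  also have "\<dots> = (\<Sum>j\<le>N. c j * (\<Sum>k=j..N. w k))" by (rule swap_fin)
  also have "\<dots> \<le> (\<Sum>j\<le>N. c j * (B / (real j + 1)))"
  proof (intro sum_mono mult_left_mono c0)
    fix j assume "j \<in> {..N}"
    then show "(\<Sum>k=j..N. w k) \<le> B / (real j + 1)" using B[of j]
      by (simp add: field_simps)
  qed
  also have "\<dots> = 2 * B * (\<Sum>k\<le>N. a k * ((\<Sum>j\<le>k. a j) / (real k + 1)))"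
    unfolding c_def sum_distrib_left by (intro sum.cong refl) (simp add: sum_divide_distrib[symmetric] sum_distrib_left[symmetric])
  also have "\<dots> \<le> 2 * B * (2 * (\<Sum>k\<le>N. (a k)\<^sup>2))"
  proof -
    have "0 \<le> (\<Sum>k=0..N. w k)" by (intro sum_nonneg) (simp add: w0)
    then have "B \<ge> 0" using B[of 0] by simp
    then show ?thesis using mult_left_mono[OF hardy_fin[of a N, OF a0], of B] by (simp add: algebra_simps)
  qed
  finally show ?thesis by simp
qed

lemma tail_bound:
  fixes w :: "nat \<Rightarrow> real"
  assumes "summable w" "\<And>k. w k \<ge> 0" "m \<le> N"
  shows "(\<Sum>k=m..N. w k) \<le> (\<Sum>k. w (k + m))"
proof -
  have "(\<Sum>k=m..N. w k) = (\<Sum>k=0+m..(N-m)+m. w k)" using assms(3) by simp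
  also have "\<dots> = (\<Sum>k\<in>{0..N-m}. w (k + m))" by (rule sum.shift_bounds_cl_nat_ivl)
  also have "\<dots> \<le> (\<Sum>k. w (k + m))"
    by (rule sum_le_suminf) (use assms summable_ignore_initial_segment in auto)
  finally show ?thesis .
qed

lemma upper:
  fixes \<alpha> f :: "nat \<Rightarrow> complex"
  assumes a: "in_l2 \<alpha>" and J: "J \<ge> 0"
    and T: "\<And>m. sqrt (real m + 1) * sqrt (\<Sum>k. (cmod (\<alpha> (k + m)))\<^sup>2) \<le> J"
    and f: "in_l2 f"
  shows "in_l2 (rhaly \<alpha> f) \<and> (\<Sum>k. (cmod (rhaly \<alpha> f k))\<^sup>2) \<le> 4 * J\<^sup>2 * (\<Sum>k. (cmod (f k))\<^sup>2)"
proof -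
  define w where "w k = (cmod (\<alpha> k))\<^sup>2" for k
  define a where "a k = cmod (f k)" for k
  have w0: "w k \<ge> 0" for k unfolding w_def by simp
  have a0: "a k \<ge> 0" for k unfolding a_def by simp
  have sw: "summable w" using a unfolding in_l2_def w_def .
  have sf: "summable (\<lambda>k. (a k)\<^sup>2)" using f unfolding in_l2_def a_def .
  have tailJ: "(real m + 1) * (\<Sum>k. w (k + m)) \<le> J\<^sup>2" for m
  proof -
    have t0: "(\<Sum>k. w (k + m)) \<ge> 0"
      by (rule suminf_nonneg) (use summable_ignore_initial_segment[OF sw] w0 in auto)
    have "sqrt ((real m + 1) * (\<Sum>k. w (k + m))) \<le> J" using T[of m] unfolding w_def
      by (simp add: real_sqrt_mult)
    then have "(sqrt ((real m + 1) * (\<Sum>k. w (k + m))))\<^sup>2 \<le> J\<^sup>2"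
      using t0 by (intro power_mono) auto
    then show ?thesis using t0 by simp
  qed
  have part: "(\<Sum>k\<le>N. (cmod (rhaly \<alpha> f k))\<^sup>2) \<le> 4 * J\<^sup>2 * (\<Sum>k. (cmod (f k))\<^sup>2)" for N
  proof -
    have "(\<Sum>k\<le>N. (cmod (rhaly \<alpha> f k))\<^sup>2) \<le> (\<Sum>k\<le>N. w k * (\<Sum>j\<le>k. a j)\<^sup>2)"
    proof (intro sum_mono)
      fix k
      have "cmod (\<Sum>j\<le>k. f j) \<le> (\<Sum>j\<le>k. a j)" unfolding a_def by (rule norm_sum)
      then have "(cmod (\<Sum>j\<le>k. f j))\<^sup>2 \<le> (\<Sum>j\<le>k. a j)\<^sup>2" by (intro power_mono) auto
      then show "(cmod (rhaly \<alpha> f k))\<^sup>2 \<le> w k * (\<Sum>j\<le>k. a j)\<^sup>2"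
        unfolding rhaly_def w_def by (simp add: norm_mult power_mult_distrib mult_left_mono)
    qed
    also have "\<dots> \<le> 4 * J\<^sup>2 * (\<Sum>k\<le>N. (a k)\<^sup>2)"
    proof (rule main_fin[OF a0 w0])
      fix m assume "m \<le> N"
      then have "(\<Sum>k=m..N. w k) \<le> (\<Sum>k. w (k + m))" by (intro tail_bound sw w0)
      then have "(real m + 1) * (\<Sum>k=m..N. w k) \<le> (real m + 1) * (\<Sum>k. w (k + m))"
        by (intro mult_left_mono) auto
      then show "(real m + 1) * (\<Sum>k=m..N. w k) \<le> J\<^sup>2" using tailJ[of m] by linarith
    qed
    also have "\<dots> \<le> 4 * J\<^sup>2 * (\<Sum>k. (a k)\<^sup>2)"
      by (intro mult_left_mono sum_le_suminf sf) auto
    finally show ?thesis unfolding a_def .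
  qed
  have part': "(\<Sum>k<n. (cmod (rhaly \<alpha> f k))\<^sup>2) \<le> 4 * J\<^sup>2 * (\<Sum>k. (cmod (f k))\<^sup>2)" for n
  proof (cases n)
    case 0 then show ?thesis using suminf_nonneg[OF f[unfolded in_l2_def]] by simp
  next
    case (Suc N) then show ?thesis using part[of N] by (simp add: lessThan_Suc_atMost)
  qed
  have s: "summable (\<lambda>k. (cmod (rhaly \<alpha> f k))\<^sup>2)"
    by (rule summableI_nonneg_bounded[OF _ part']) simp
  show ?thesis using s part' unfolding in_l2_def by (auto intro: suminf_le_const)
qed

definition fm :: "nat \<Rightarrow> nat \<Rightarrow> complex" where
  "fm m j = (if j \<le> m then complex_of_real (1 / sqrt (real m + 1)) else 0)"

lemma fm_l2: "in_l2 (fm m) \<and> l2_norm (fm m) = 1"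
proof -
  have z: "n \<notin> {..m} \<Longrightarrow> (cmod (fm m n))\<^sup>2 = 0" for n unfolding fm_def by simp
  have s: "summable (\<lambda>n. (cmod (fm m n))\<^sup>2)" by (rule summable_finite[of "{..m}", OF _ z]) auto
  have "(\<Sum>n. (cmod (fm m n))\<^sup>2) = (\<Sum>n\<le>m. (cmod (fm m n))\<^sup>2)" by (rule suminf_finite[of "{..m}", OF _ z]) auto
  also have "\<dots> = (\<Sum>n\<le>m. 1 / (real m + 1))"
    by (intro sum.cong refl) (simp add: fm_def power_divide norm_divide)
  also have "\<dots> = 1" by simp
  finally show ?thesis using s unfolding l2_norm_def in_l2_def by simp
qed

lemma lower:
  fixes \<alpha> :: "nat \<Rightarrow> complex"
  shows "ereal (sqrt (real m + 1) * sqrt (\<Sum>k. (cmod (\<alpha> (k + m)))\<^sup>2)) \<le> l2_norm (rhaly \<alpha> (fm m))"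
proof (cases "in_l2 (rhaly \<alpha> (fm m))")
  case False then show ?thesis unfolding l2_norm_def by simp
next
  case True
  let ?g = "\<lambda>k. (cmod (rhaly \<alpha> (fm m) k))\<^sup>2"
  have s: "summable ?g" using True unfolding in_l2_def .
  have val: "?g (k + m) = (real m + 1) * (cmod (\<alpha> (k + m)))\<^sup>2" for k
  proof -
    have "(\<Sum>j\<le>k+m. fm m j) = (\<Sum>j\<in>{..k+m} \<inter> {..m}. complex_of_real (1 / sqrt (real m + 1)))"
      by (subst sum.inter_restrict) (auto simp: fm_def)
    also have "{..k+m} \<inter> {..m} = {..m}" by auto
    finally have "(\<Sum>j\<le>k+m. fm m j) = complex_of_real ((real m + 1) / sqrt (real m + 1))" by simp
    also have "(real m + 1) / sqrt (real m + 1) = sqrt (real m + 1)"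
      by (metis real_div_sqrt add_nonneg_nonneg of_nat_0_le_iff zero_le_one)
    finally show ?thesis unfolding rhaly_def
      by (simp add: norm_mult power_mult_distrib)
  qed
  have "(real m + 1) * (\<Sum>k. (cmod (\<alpha> (k + m)))\<^sup>2) = (\<Sum>k. ?g (k + m))"
    unfolding val by (rule suminf_mult[symmetric]) (use summable_ignore_initial_segment[OF s, of m] val in simp)
  also have "\<dots> \<le> (\<Sum>k. ?g k)"
    using suminf_split_initial_segment[OF s, of m] by (simp add: sum_nonneg)
  finally have "sqrt ((real m + 1) * (\<Sum>k. (cmod (\<alpha> (k + m)))\<^sup>2)) \<le> sqrt (\<Sum>k. ?g k)"
    by simp
  then show ?thesis using True unfolding l2_norm_def by (simp add: real_sqrt_mult)
qed

theorem theorem2p3: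
  fixes \<alpha> :: "nat \<Rightarrow> complex"
  assumes "in_l2 \<alpha>"
  shows "(rhaly_bounded \<alpha> \<longleftrightarrow> J0 \<alpha> < \<infinity>) \<and>
         (rhaly_bounded \<alpha> \<longrightarrow>
            J0 \<alpha> \<le> rhaly_norm \<alpha> \<and> rhaly_norm \<alpha> \<le> ereal (2 * sqrt 2) * J0 \<alpha>)"
proof -
  define T where "T m = sqrt (real m + 1) * sqrt (\<Sum>k. (cmod (\<alpha> (k + m)))\<^sup>2)" for m
  have J0T: "J0 \<alpha> = (SUP m. ereal (T m))" unfolding J0_def T_def ..
  have low: "J0 \<alpha> \<le> rhaly_norm \<alpha>"
    unfolding J0T
  proof (rule SUP_least)
    fix m
    have "ereal (T m) \<le> l2_norm (rhaly \<alpha> (fm m))" unfolding T_def by (rule lower)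
    also have "\<dots> \<le> rhaly_norm \<alpha>" unfolding rhaly_norm_def
      by (rule SUP_upper) (use fm_l2[of m] in auto)
    finally show "ereal (T m) \<le> rhaly_norm \<alpha>" .
  qed
  have b2J: "J0 \<alpha> < \<infinity>" if bdd: "rhaly_bounded \<alpha>"
  proof -
    obtain C where C: "\<And>f. in_l2 f \<Longrightarrow> l2_norm (rhaly \<alpha> f) \<le> ereal C * l2_norm f"
      using bdd unfolding rhaly_bounded_def by blast
    have "J0 \<alpha> \<le> ereal C" unfolding J0T
    proof (rule SUP_least)
      fix m
      have "ereal (T m) \<le> l2_norm (rhaly \<alpha> (fm m))" unfolding T_def by (rule lower)
      also have "\<dots> \<le> ereal C * l2_norm (fm m)" using C fm_l2 by blast
      also have "\<dots> = ereal C" using fm_l2[of m] by simp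
      finally show "ereal (T m) \<le> ereal C" .
    qed
    then show ?thesis by (rule order_le_less_trans) simp
  qed
  have J2b: "rhaly_bounded \<alpha> \<and> rhaly_norm \<alpha> \<le> ereal (2 * sqrt 2) * J0 \<alpha>" if fin: "J0 \<alpha> < \<infinity>"
  proof -
    have T0: "T m \<ge> 0" for m unfolding T_def
      by (intro mult_nonneg_nonneg real_sqrt_ge_zero suminf_nonneg)
        (use summable_ignore_initial_segment[OF assms[unfolded in_l2_def]] in auto)
    have "ereal (T 0) \<le> J0 \<alpha>" unfolding J0T by (rule SUP_upper) auto
    moreover have "0 \<le> ereal (T 0)" using T0[of 0] by simp
    ultimately have J00: "J0 \<alpha> \<ge> 0" by (rule order_trans[rotated])
    define J where "J = real_of_ereal (J0 \<alpha>)"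
    have JJ: "J0 \<alpha> = ereal J" unfolding J_def using fin J00
      by (cases "J0 \<alpha>") auto
    have J0: "J \<ge> 0" using J00 JJ by simp
    have TJ: "T m \<le> J" for m
    proof -
      have "ereal (T m) \<le> J0 \<alpha>" unfolding J0T by (rule SUP_upper) auto
      then show ?thesis using JJ by simp
    qed
    have U: "in_l2 (rhaly \<alpha> f) \<and> (\<Sum>k. (cmod (rhaly \<alpha> f k))\<^sup>2) \<le> 4 * J\<^sup>2 * (\<Sum>k. (cmod (f k))\<^sup>2)"
      if "in_l2 f" for f
      by (rule upper[OF assms J0 _ that]) (use TJ in \<open>simp add: T_def\<close>)
    have N: "l2_norm (rhaly \<alpha> f) \<le> ereal (2 * J) * l2_norm f" if f: "in_l2 f" for f
    proof -
      have "sqrt (\<Sum>k. (cmod (rhaly \<alpha> f k))\<^sup>2) \<le> sqrt (4 * J\<^sup>2 * (\<Sum>k. (cmod (f k))\<^sup>2))"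
        using U[OF f] by simp
      also have "\<dots> = 2 * J * sqrt (\<Sum>k. (cmod (f k))\<^sup>2)"
        using J0 by (simp add: real_sqrt_mult)
      finally show ?thesis using U[OF f] f unfolding l2_norm_def by simp
    qed
    have bd: "rhaly_bounded \<alpha>" unfolding rhaly_bounded_def
      by (intro conjI exI[of _ "2 * J"] allI impI) (simp_all add: U N)
    have "rhaly_norm \<alpha> \<le> ereal (2 * sqrt 2 * J)" unfolding rhaly_norm_def
    proof (rule SUP_least)
      fix f assume "f \<in> {f. in_l2 f \<and> l2_norm f = 1}"
      then have f: "in_l2 f" "l2_norm f = 1" by auto
      have "l2_norm (rhaly \<alpha> f) \<le> ereal (2 * J)" using N[OF f(1)] f(2) by simp
      also have "2 * J \<le> 2 * sqrt 2 * J" using J0 by (simp add: mult_right_mono)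
      then have "ereal (2 * J) \<le> ereal (2 * sqrt 2 * J)" by simp
      finally show "l2_norm (rhaly \<alpha> f) \<le> ereal (2 * sqrt 2 * J)" .
    qed
    then show ?thesis using bd JJ by simp
  qed
  show ?thesis using low b2J J2b by blast
qed

end
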